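(* Let $L\subseteq Q$ be a dense extension of symmetric Leibniz algebras, and suppose $Q$ is a multiplicatively prime algebra of quotients of $L$. Then $I\subseteq Q$ is a dense extension for every nonzero ideal $I$ of $L$.
   Context: A symmetric Leibniz algebra satisfies both $[x,[y,z]]=[[x,y],z]-[[x,z],y]$ and $[x,[y,z]]=[[x,y],z]+[y,[x,z]]$. For $x\in Q$, $R_x(u)=[u,x]$, $L_x(u)=[x,u]$; $M(Q)$ is the associative subalgebra of $\mathrm{End}(Q)$ generated by the identity and all $R_x,L_x$. A subalgebra $K$ of $Q$ is dense ($K\subseteq Q$ is a dense extension) if the only $\mu\in M(Q)$ with $\mu(K)=\{0\}$ is $\mu=0$. A Leibniz algebra is prime if $[I,J]\ne\{0\}$ for all nonzero ideals $I,J$; an associative algebra is prime if the product of any two nonzero two-sided ideals is nonzero. $Q$ is multiplicatively prime if $Q$ and $M(Q)$ are prime. With $\mathscr{A}_Q(L)$ the associative algebra generated by $R_x,L_y$ ($x,y\in L$), ${}_L(q)=\mathbb{F}q+\{\sum\xi_i(q):\xi_i\in\mathscr{A}_Q(L)\}$, $(L:q)=\{x\in L:[x,{}_L(q)]\subseteq L,[{}_L(q),x]\subseteq L\}$; $Q$ is an algebra of quotients of $L$ if for all $p,q\in Q$, $p\ne0$, there is $x\in(L:q)$ with $[x,p]\ne0$ or $y\in(L:q)$ with $[p,y]\ne0$. *)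

theory Defs
  imports Complex_Main
begin

text \<open>A (symmetric Leibniz) algebra is modelled on a type 'q, which plays the role of Q,
 with scalar multiplication sm by a field 'k and a bracket br.  Subsets of 'q model
 subalgebras / ideals of Q.\<close>

definition sym_leibniz :: "('k::field \<Rightarrow> 'q::ab_group_add \<Rightarrow> 'q) \<Rightarrow> ('q \<Rightarrow> 'q \<Rightarrow> 'q) \<Rightarrow> bool" where
  "sym_leibniz sm br \<longleftrightarrow>
     Vector_Spaces.vector_space sm \<and>
     (\<forall>x y z. br (x + y) z = br x z + br y z) \<and>
     (\<forall>x y z. br x (y + z) = br x y + br x z) \<and>
     (\<forall>a x y. br (sm a x) y = sm a (br x y)) \<and>
     (\<forall>a x y. br x (sm a y) = sm a (br x y)) \<and>
     (\<forall>x y z. br x (br y z) = br (br x y) z - br (br x z) y) \<and>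
     (\<forall>x y z. br x (br y z) = br (br x y) z + br y (br x z))"

definition subalgebra :: "('k::field \<Rightarrow> 'q::ab_group_add \<Rightarrow> 'q) \<Rightarrow> ('q \<Rightarrow> 'q \<Rightarrow> 'q) \<Rightarrow> 'q set \<Rightarrow> bool" where
  "subalgebra sm br K \<longleftrightarrow> Modules.module.subspace sm K \<and> (\<forall>x\<in>K. \<forall>y\<in>K. br x y \<in> K)"

definition ideal_of :: "('k::field \<Rightarrow> 'q::ab_group_add \<Rightarrow> 'q) \<Rightarrow> ('q \<Rightarrow> 'q \<Rightarrow> 'q) \<Rightarrow> 'q set \<Rightarrow> 'q set \<Rightarrow> bool" where
  "ideal_of sm br L I \<longleftrightarrow> Modules.module.subspace sm I \<and> I \<subseteq> L \<and>
     (\<forall>x\<in>L. \<forall>i\<in>I. br x i \<in> I \<and> br i x \<in> I)"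

text \<open>M(Q): associative subalgebra of End(Q) generated by the identity and all R_x, L_x.\<close>
inductive_set multalg :: "('k::field \<Rightarrow> 'q::ab_group_add \<Rightarrow> 'q) \<Rightarrow> ('q \<Rightarrow> 'q \<Rightarrow> 'q) \<Rightarrow> ('q \<Rightarrow> 'q) set"
  for sm br where
  M_id: "id \<in> multalg sm br"
| M_R: "(\<lambda>u. br u x) \<in> multalg sm br"
| M_L: "(\<lambda>u. br x u) \<in> multalg sm br"
| M_add: "f \<in> multalg sm br \<Longrightarrow> g \<in> multalg sm br \<Longrightarrow> (\<lambda>u. f u + g u) \<in> multalg sm br"
| M_smult: "f \<in> multalg sm br \<Longrightarrow> (\<lambda>u. sm a (f u)) \<in> multalg sm br"
| M_comp: "f \<in> multalg sm br \<Longrightarrow> g \<in> multalg sm br \<Longrightarrow> f \<circ> g \<in> multalg sm br"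

inductive_set assoc_L :: "('k::field \<Rightarrow> 'q::ab_group_add \<Rightarrow> 'q) \<Rightarrow> ('q \<Rightarrow> 'q \<Rightarrow> 'q) \<Rightarrow> 'q set \<Rightarrow> ('q \<Rightarrow> 'q) set"
  for sm br L where
  A_R: "x \<in> L \<Longrightarrow> (\<lambda>u. br u x) \<in> assoc_L sm br L"
| A_L: "x \<in> L \<Longrightarrow> (\<lambda>u. br x u) \<in> assoc_L sm br L"
| A_add: "f \<in> assoc_L sm br L \<Longrightarrow> g \<in> assoc_L sm br L \<Longrightarrow> (\<lambda>u. f u + g u) \<in> assoc_L sm br L"
| A_smult: "f \<in> assoc_L sm br L \<Longrightarrow> (\<lambda>u. sm a (f u)) \<in> assoc_L sm br L"
| A_comp: "f \<in> assoc_L sm br L \<Longrightarrow> g \<in> assoc_L sm br L \<Longrightarrow> f \<circ> g \<in> assoc_L sm br L"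

definition dense_ext :: "('k::field \<Rightarrow> 'q::ab_group_add \<Rightarrow> 'q) \<Rightarrow> ('q \<Rightarrow> 'q \<Rightarrow> 'q) \<Rightarrow> 'q set \<Rightarrow> bool" where
  "dense_ext sm br K \<longleftrightarrow> (\<forall>\<mu>\<in>multalg sm br. (\<forall>k\<in>K. \<mu> k = 0) \<longrightarrow> \<mu> = (\<lambda>u. 0))"

definition prime_leibniz :: "('k::field \<Rightarrow> 'q::ab_group_add \<Rightarrow> 'q) \<Rightarrow> ('q \<Rightarrow> 'q \<Rightarrow> 'q) \<Rightarrow> bool" where
  "prime_leibniz sm br \<longleftrightarrow> (\<forall>I J. ideal_of sm br UNIV I \<and> I \<noteq> {0} \<and> ideal_of sm br UNIV J \<and> J \<noteq> {0}
       \<longrightarrow> (\<exists>i\<in>I. \<exists>j\<in>J. br i j \<noteq> 0))"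

definition mult_ideal :: "('k::field \<Rightarrow> 'q::ab_group_add \<Rightarrow> 'q) \<Rightarrow> ('q \<Rightarrow> 'q \<Rightarrow> 'q) \<Rightarrow> ('q \<Rightarrow> 'q) set \<Rightarrow> bool" where
  "mult_ideal sm br J \<longleftrightarrow> J \<subseteq> multalg sm br \<and> (\<lambda>u. 0) \<in> J \<and>
     (\<forall>f\<in>J. \<forall>g\<in>J. (\<lambda>u. f u + g u) \<in> J) \<and> (\<forall>f\<in>J. \<forall>a. (\<lambda>u. sm a (f u)) \<in> J) \<and>
     (\<forall>f\<in>J. \<forall>m\<in>multalg sm br. m \<circ> f \<in> J \<and> f \<circ> m \<in> J)"

definition prime_multalg :: "('k::field \<Rightarrow> 'q::ab_group_add \<Rightarrow> 'q) \<Rightarrow> ('q \<Rightarrow> 'q \<Rightarrow> 'q) \<Rightarrow> bool" where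
  "prime_multalg sm br \<longleftrightarrow> (\<forall>I J. mult_ideal sm br I \<and> I \<noteq> {\<lambda>u. 0} \<and> mult_ideal sm br J \<and> J \<noteq> {\<lambda>u. 0}
       \<longrightarrow> (\<exists>f\<in>I. \<exists>g\<in>J. f \<circ> g \<noteq> (\<lambda>u. 0)))"

definition mult_prime :: "('k::field \<Rightarrow> 'q::ab_group_add \<Rightarrow> 'q) \<Rightarrow> ('q \<Rightarrow> 'q \<Rightarrow> 'q) \<Rightarrow> bool" where
  "mult_prime sm br \<longleftrightarrow> prime_leibniz sm br \<and> prime_multalg sm br"

definition gen_L :: "('k::field \<Rightarrow> 'q::ab_group_add \<Rightarrow> 'q) \<Rightarrow> ('q \<Rightarrow> 'q \<Rightarrow> 'q) \<Rightarrow> 'q set \<Rightarrow> 'q \<Rightarrow> 'q set" where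
  "gen_L sm br L q = {sm a q + sum (\<lambda>f. f q) F | a F. finite F \<and> F \<subseteq> assoc_L sm br L}"

definition colon_L :: "('k::field \<Rightarrow> 'q::ab_group_add \<Rightarrow> 'q) \<Rightarrow> ('q \<Rightarrow> 'q \<Rightarrow> 'q) \<Rightarrow> 'q set \<Rightarrow> 'q \<Rightarrow> 'q set" where
  "colon_L sm br L q = {x \<in> L. \<forall>y\<in>gen_L sm br L q. br x y \<in> L \<and> br y x \<in> L}"

definition algebra_of_quotients :: "('k::field \<Rightarrow> 'q::ab_group_add \<Rightarrow> 'q) \<Rightarrow> ('q \<Rightarrow> 'q \<Rightarrow> 'q) \<Rightarrow> 'q set \<Rightarrow> bool" where
  "algebra_of_quotients sm br L \<longleftrightarrow> (\<forall>p q. p \<noteq> 0 \<longrightarrow>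
     (\<exists>x\<in>colon_L sm br L q. br x p \<noteq> 0) \<or> (\<exists>y\<in>colon_L sm br L q. br p y \<noteq> 0))"

end

theory Submission
  imports Defs
begin

lemma sl_module: "sym_leibniz sm br \<Longrightarrow> module sm"
  unfolding sym_leibniz_def by (simp add: module_iff_vector_space)

lemma multalg_lin:
  assumes S: "sym_leibniz sm br" and m: "m \<in> multalg sm br"
  shows "(\<forall>x y. m (x + y) = m x + m y) \<and> (\<forall>a x. m (sm a x) = sm a (m x))"
  using m
proof (induction rule: multalg.induct)
  case M_id then show ?case by simp
next
  case (M_R x) then show ?case using S unfolding sym_leibniz_def by simp
next
  case (M_L x) then show ?case using S unfolding sym_leibniz_def by simp
next
  case (M_add f g)
  have md: "module sm" using S by (rule sl_module)
  show ?case using M_add by (simp add: module.scale_right_distrib[OF md] algebra_simps)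
next
  case (M_smult f b)
  have md: "module sm" using S by (rule sl_module)
  show ?case using M_smult by (simp add: module.scale_right_distrib[OF md] module.scale_left_commute[OF md])
next
  case (M_comp f g) then show ?case by simp
qed

lemma multalg_add: "sym_leibniz sm br \<Longrightarrow> m \<in> multalg sm br \<Longrightarrow> m (x + y) = m x + m y"
  using multalg_lin by blast

lemma multalg_scale: "sym_leibniz sm br \<Longrightarrow> m \<in> multalg sm br \<Longrightarrow> m (sm a x) = sm a (m x)"
  using multalg_lin by blast

lemma multalg_zero: "sym_leibniz sm br \<Longrightarrow> m \<in> multalg sm br \<Longrightarrow> m 0 = 0"
  using multalg_add[of sm br m 0 0] by simp

lemma zero_in_multalg:
  assumes S: "sym_leibniz sm br" shows "(\<lambda>u. 0) \<in> multalg sm br"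
proof -
  have md: "module sm" using S by (rule sl_module)
  have "(\<lambda>u. sm 0 (id u)) \<in> multalg sm br" by (rule multalg.M_smult[OF multalg.M_id])
  moreover have "(\<lambda>u. sm 0 (id u)) = (\<lambda>u. 0)" by (simp add: module.scale_zero_left[OF md])
  ultimately show ?thesis by simp
qed

lemma main_step:
  assumes S: "sym_leibniz sm br" and D: "dense_ext sm br L" and Id: "ideal_of sm br L I"
    and b: "b \<in> multalg sm br"
  shows "\<forall>\<nu>\<in>multalg sm br. (\<forall>i\<in>I. \<nu> i = 0) \<longrightarrow> (\<forall>i\<in>I. \<nu> (b i) = 0)"
  using b
proof (induction rule: multalg.induct)
  case M_id then show ?case by simp
next
  case (M_R x)
  show ?case
  proof (intro ballI impI)
    fix \<nu> i assume nu: "\<nu> \<in> multalg sm br" and k: "\<forall>i\<in>I. \<nu> i = 0" and i: "i \<in> I"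
    have c: "\<nu> \<circ> (\<lambda>u. br i u) \<in> multalg sm br" by (rule multalg.M_comp[OF nu multalg.M_L])
    have "\<forall>l\<in>L. (\<nu> \<circ> (\<lambda>u. br i u)) l = 0" using Id k i unfolding ideal_of_def by simp
    then have "\<nu> \<circ> (\<lambda>u. br i u) = (\<lambda>u. 0)" using D c unfolding dense_ext_def by blast
    then show "\<nu> (br i x) = 0" by (metis comp_apply)
  qed
next
  case (M_L x)
  show ?case
  proof (intro ballI impI)
    fix \<nu> i assume nu: "\<nu> \<in> multalg sm br" and k: "\<forall>i\<in>I. \<nu> i = 0" and i: "i \<in> I"
    have c: "\<nu> \<circ> (\<lambda>u. br u i) \<in> multalg sm br" by (rule multalg.M_comp[OF nu multalg.M_R])
    have "\<forall>l\<in>L. (\<nu> \<circ> (\<lambda>u. br u i)) l = 0" using Id k i unfolding ideal_of_def by simp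
    then have "\<nu> \<circ> (\<lambda>u. br u i) = (\<lambda>u. 0)" using D c unfolding dense_ext_def by blast
    then show "\<nu> (br x i) = 0" by (metis comp_apply)
  qed
next
  case (M_add f g)
  show ?case
  proof (intro ballI impI)
    fix \<nu> i assume nu: "\<nu> \<in> multalg sm br" and k: "\<forall>i\<in>I. \<nu> i = 0" and i: "i \<in> I"
    have "\<nu> (f i) = 0" "\<nu> (g i) = 0" using M_add.IH nu k i by blast+
    then show "\<nu> (f i + g i) = 0" using multalg_add[OF S nu] by simp
  qed
next
  case (M_smult f a)
  have md: "module sm" using S by (rule sl_module)
  show ?case
  proof (intro ballI impI)
    fix \<nu> i assume nu: "\<nu> \<in> multalg sm br" and k: "\<forall>i\<in>I. \<nu> i = 0" and i: "i \<in> I"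
    have "\<nu> (f i) = 0" using M_smult.IH nu k i by blast
    then show "\<nu> (sm a (f i)) = 0" using multalg_scale[OF S nu] by (simp add: module.scale_zero_right[OF md])
  qed
next
  case (M_comp f g)
  show ?case
  proof (intro ballI impI)
    fix \<nu> i assume nu: "\<nu> \<in> multalg sm br" and k: "\<forall>i\<in>I. \<nu> i = 0" and i: "i \<in> I"
    have c: "\<nu> \<circ> f \<in> multalg sm br" by (rule multalg.M_comp[OF nu M_comp.hyps(1)])
    have "\<forall>i\<in>I. (\<nu> \<circ> f) i = 0" using M_comp.IH(1) nu k by simp
    then have "\<forall>i\<in>I. (\<nu> \<circ> f) (g i) = 0" using M_comp.IH(2) c by blast
    then show "\<nu> ((f \<circ> g) i) = 0" using i by simp
  qed
qed

theorem corollary6p6: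
  fixes sm :: "'k::field \<Rightarrow> 'q::ab_group_add \<Rightarrow> 'q" and br :: "'q \<Rightarrow> 'q \<Rightarrow> 'q"
    and L I :: "'q set"
  assumes "sym_leibniz sm br"
    and "subalgebra sm br L"
    and "dense_ext sm br L"
    and "mult_prime sm br"
    and "algebra_of_quotients sm br L"
    and "ideal_of sm br L I"
    and "I \<noteq> {0}"
  shows "dense_ext sm br I"
  unfolding dense_ext_def
proof (intro ballI impI)
  note S = assms(1)
  have md: "module sm" using S by (rule sl_module)
  fix \<nu> assume nu: "\<nu> \<in> multalg sm br" and k: "\<forall>i\<in>I. \<nu> i = 0"
  define J where "J = {q. \<forall>b\<in>multalg sm br. \<nu> (b q) = 0}"
  have IJ: "I \<subseteq> J"
  proof
    fix i assume i: "i \<in> I"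
    show "i \<in> J" unfolding J_def
    proof (intro CollectI ballI)
      fix b assume b: "b \<in> multalg sm br"
      show "\<nu> (b i) = 0" using main_step[OF S assms(3) assms(6) b] nu k i by blast
    qed
  qed
  have bJ: "b q \<in> J" if b: "b \<in> multalg sm br" and q: "q \<in> J" for b q
    unfolding J_def
  proof (intro CollectI ballI)
    fix c assume c: "c \<in> multalg sm br"
    have "c \<circ> b \<in> multalg sm br" by (rule multalg.M_comp[OF c b])
    then have "\<nu> ((c \<circ> b) q) = 0" using q unfolding J_def by blast
    then show "\<nu> (c (b q)) = 0" by simp
  qed
  have nuJ: "\<nu> q = 0" if "q \<in> J" for q
  proof -
    have "\<nu> (id q) = 0" using that multalg.M_id unfolding J_def by blast
    then show ?thesis by simp
  qed
  have J0: "0 \<in> J" unfolding J_def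
  proof (intro CollectI ballI)
    fix b assume b: "b \<in> multalg sm br"
    show "\<nu> (b 0) = 0" using multalg_zero[OF S b] multalg_zero[OF S nu] by simp
  qed
  have Jadd: "x + y \<in> J" if x: "x \<in> J" and y: "y \<in> J" for x y
    unfolding J_def
  proof (intro CollectI ballI)
    fix b assume b: "b \<in> multalg sm br"
    have "\<nu> (b x) = 0" "\<nu> (b y) = 0" using x y b unfolding J_def by blast+
    then show "\<nu> (b (x + y)) = 0" using multalg_add[OF S b] multalg_add[OF S nu] by simp
  qed
  have Jsc: "sm a x \<in> J" if x: "x \<in> J" for a x
    unfolding J_def
  proof (intro CollectI ballI)
    fix b assume b: "b \<in> multalg sm br"
    have "\<nu> (b x) = 0" using x b unfolding J_def by blast
    then show "\<nu> (b (sm a x)) = 0" using multalg_scale[OF S b] multalg_scale[OF S nu]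
      by (simp add: module.scale_zero_right[OF md])
  qed
  have Jid: "ideal_of sm br UNIV J"
    unfolding ideal_of_def module.subspace_def[OF md]
  proof (intro conjI ballI allI)
    fix x i assume "i \<in> J"
    then show "br x i \<in> J" "br i x \<in> J"
      using bJ[OF multalg.M_L[where x=x]] bJ[OF multalg.M_R[where x=x]] by auto
  qed (auto intro: J0 Jadd Jsc)
  obtain i0 where i0: "i0 \<in> I" "i0 \<noteq> 0"
    using assms(6) assms(7) unfolding ideal_of_def module.subspace_def[OF md] by blast
  have "J \<noteq> {0}" using i0 IJ by blast
  then obtain i j where ij: "i \<in> J" "j \<in> J" "br i j \<noteq> 0"
    using assms(4) Jid unfolding mult_prime_def prime_leibniz_def by blast
  define T where "T = {\<tau> \<in> multalg sm br. \<forall>u. \<tau> u \<in> J}"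
  define I1 where "I1 = {f \<in> multalg sm br. \<forall>b\<in>multalg sm br. \<forall>\<tau>\<in>T. f \<circ> b \<circ> \<tau> = (\<lambda>u. 0)}"
  have z: "(\<lambda>u. 0) \<in> multalg sm br" by (rule zero_in_multalg[OF S])
  have Tid: "mult_ideal sm br T"
    unfolding mult_ideal_def
  proof (intro conjI ballI allI)
    show "T \<subseteq> multalg sm br" unfolding T_def by blast
    show "(\<lambda>u. 0) \<in> T" unfolding T_def using z J0 by simp
    fix f g assume f: "f \<in> T"
    { assume g: "g \<in> T" show "(\<lambda>u. f u + g u) \<in> T"
        using f g Jadd multalg.M_add unfolding T_def by blast }
    { fix a show "(\<lambda>u. sm a (f u)) \<in> T" using f Jsc multalg.M_smult unfolding T_def by blast }
    { assume g: "g \<in> multalg sm br"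
      show "g \<circ> f \<in> T" using f g bJ multalg.M_comp[OF g] unfolding T_def by auto
      show "f \<circ> g \<in> T" using f g multalg.M_comp[OF _ g] unfolding T_def by auto }
  qed
  have I1id: "mult_ideal sm br I1"
    unfolding mult_ideal_def
  proof (intro conjI ballI allI)
    show "I1 \<subseteq> multalg sm br" unfolding I1_def by blast
    show "(\<lambda>u. 0) \<in> I1" unfolding I1_def using z by (simp add: comp_def)
    fix f g assume f: "f \<in> I1"
    { assume g: "g \<in> I1" show "(\<lambda>u. f u + g u) \<in> I1"
      proof -
        have "(\<lambda>u. f u + g u) \<in> multalg sm br" using f g multalg.M_add unfolding I1_def by blast
        moreover have "\<forall>b\<in>multalg sm br. \<forall>\<tau>\<in>T. (\<lambda>u. f u + g u) \<circ> b \<circ> \<tau> = (\<lambda>u. 0)"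
        proof (intro ballI ext)
          fix b \<tau> u assume "b \<in> multalg sm br" "\<tau> \<in> T"
          then have "(f \<circ> b \<circ> \<tau>) u = 0" "(g \<circ> b \<circ> \<tau>) u = 0" using f g unfolding I1_def by auto
          then show "((\<lambda>u. f u + g u) \<circ> b \<circ> \<tau>) u = 0" by simp
        qed
        ultimately show ?thesis unfolding I1_def by blast
      qed }
    { fix a show "(\<lambda>u. sm a (f u)) \<in> I1"
      proof -
        have "(\<lambda>u. sm a (f u)) \<in> multalg sm br" using f multalg.M_smult unfolding I1_def by blast
        moreover have "\<forall>b\<in>multalg sm br. \<forall>\<tau>\<in>T. (\<lambda>u. sm a (f u)) \<circ> b \<circ> \<tau> = (\<lambda>u. 0)"
        proof (intro ballI ext)
          fix b \<tau> u assume "b \<in> multalg sm br" "\<tau> \<in> T"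
          then have "(f \<circ> b \<circ> \<tau>) u = 0" using f unfolding I1_def by auto
          then show "((\<lambda>u. sm a (f u)) \<circ> b \<circ> \<tau>) u = 0" by (simp add: module.scale_zero_right[OF md])
        qed
        ultimately show ?thesis unfolding I1_def by blast
      qed }
    { assume g: "g \<in> multalg sm br"
      show "g \<circ> f \<in> I1"
      proof -
        have "g \<circ> f \<in> multalg sm br" using f g multalg.M_comp unfolding I1_def by blast
        moreover have "\<forall>b\<in>multalg sm br. \<forall>\<tau>\<in>T. (g \<circ> f) \<circ> b \<circ> \<tau> = (\<lambda>u. 0)"
        proof (intro ballI ext)
          fix b \<tau> u assume "b \<in> multalg sm br" "\<tau> \<in> T"
          then have "(f \<circ> b \<circ> \<tau>) u = 0" using f unfolding I1_def by auto
          then show "((g \<circ> f) \<circ> b \<circ> \<tau>) u = 0" using multalg_zero[OF S g] by simp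
        qed
        ultimately show ?thesis unfolding I1_def by blast
      qed
      show "f \<circ> g \<in> I1"
      proof -
        have "f \<circ> g \<in> multalg sm br" using f g multalg.M_comp unfolding I1_def by blast
        moreover have "\<forall>b\<in>multalg sm br. \<forall>\<tau>\<in>T. (f \<circ> g) \<circ> b \<circ> \<tau> = (\<lambda>u. 0)"
        proof (intro ballI)
          fix b \<tau> assume b: "b \<in> multalg sm br" and t: "\<tau> \<in> T"
          have "g \<circ> b \<in> multalg sm br" using g b multalg.M_comp by blast
          then have "f \<circ> (g \<circ> b) \<circ> \<tau> = (\<lambda>u. 0)" using f t unfolding I1_def by blast
          then show "(f \<circ> g) \<circ> b \<circ> \<tau> = (\<lambda>u. 0)" by (simp add: comp_assoc)
        qed
        ultimately show ?thesis unfolding I1_def by blast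
      qed }
  qed
  have nuI1: "\<nu> \<in> I1"
  proof -
    have "\<forall>b\<in>multalg sm br. \<forall>\<tau>\<in>T. \<nu> \<circ> b \<circ> \<tau> = (\<lambda>u. 0)"
    proof (intro ballI ext)
      fix b \<tau> u assume b: "b \<in> multalg sm br" and t: "\<tau> \<in> T"
      have "\<tau> u \<in> J" using t unfolding T_def by blast
      then have "b (\<tau> u) \<in> J" using bJ b by blast
      then show "(\<nu> \<circ> b \<circ> \<tau>) u = 0" using nuJ by simp
    qed
    then show ?thesis using nu unfolding I1_def by blast
  qed
  have tau: "(\<lambda>u. br i u) \<in> T" unfolding T_def
  proof (intro CollectI conjI allI)
    show "(\<lambda>u. br i u) \<in> multalg sm br" by (rule multalg.M_L)
    fix u
    have "(\<lambda>v. br v u) \<in> multalg sm br" by (rule multalg.M_R)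
    from bJ[OF this ij(1)] show "br i u \<in> J" by simp
  qed
  have TnZ: "T \<noteq> {\<lambda>u. 0}"
  proof
    assume "T = {\<lambda>u. 0}"
    then have "(\<lambda>u. br i u) = (\<lambda>u. 0)" using tau by blast
    then have "br i j = 0" by (rule fun_cong)
    then show False using ij(3) by simp
  qed
  have noprod: "\<forall>f\<in>I1. \<forall>g\<in>T. f \<circ> g = (\<lambda>u. 0)"
  proof (intro ballI)
    fix f g assume "f \<in> I1" "g \<in> T"
    then have "f \<circ> id \<circ> g = (\<lambda>u. 0)" using multalg.M_id[of sm br] unfolding I1_def by blast
    then show "f \<circ> g = (\<lambda>u. 0)" by simp
  qed
  show "\<nu> = (\<lambda>u. 0)"
  proof (rule ccontr)
    assume "\<nu> \<noteq> (\<lambda>u. 0)"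
    then have "I1 \<noteq> {\<lambda>u. 0}" using nuI1 by blast
    moreover have "prime_multalg sm br" using assms(4) unfolding mult_prime_def by blast
    ultimately obtain f g where "f \<in> I1" "g \<in> T" "f \<circ> g \<noteq> (\<lambda>u. 0)"
      using I1id Tid TnZ unfolding prime_multalg_def by blast
    then show False using noprod by blast
  qed
qed

end
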